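(* Let $X,Y$ be real Hilbert spaces and $T:X\to Y$ an injective bounded linear operator. Let $x^\dagger\in X$, $y^\dagger:=Tx^\dagger$, and $x_0\in X$. For $\alpha>0$ let $x_\alpha:=(T^*T+\alpha I)^{-1}(T^*y^\dagger+\alpha x_0)$, i.e. the unique minimizer over $x\in X$ of $\|y^\dagger-Tx\|^2+\alpha\|x-x_0\|^2$. Let $0\le\nu\le1$. Then $$N_\nu^{-1}\|x^\dagger-x_0\|_{\nu:1}\le\sup_{\alpha>0}\alpha^{-\nu}\|x^\dagger-x_\alpha\|\le\|x^\dagger-x_0\|_{\nu:1}.$$ Equalities hold for $\nu=0$ and $\nu=1$. If $\nu=1$, then $\sup_{\alpha>0}$ can be replaced by $\lim_{\alpha\searrow0}$.
   Context: $X_1:=\mathrm{range}(T^*T)$ with norm $\|x\|_1:=\|(T^*T)^{-1}x\|$. For $x\in X$ and $t>0$, $K_t(x):=\inf_{x_1\in X_1}\big(\|x-x_1\|^2+t^2\|x_1\|_1^2\big)^{1/2}$, and for $0\le\nu\le1$, $\|x\|_{\nu:1}:=\sup_{t>0}t^{-\nu}K_t(x)\in[0,\infty]$. For $0<\nu<1$, $N_\nu:=\big(\nu^\nu(1-\nu)^{1-\nu}\big)^{-1/2}$, and $N_0:=N_1:=1$. *)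

theory Defs
  imports "HOL-Analysis.Analysis"
begin

text \<open>Here A stands for the operator T^*T; X_1 = range A with norm |x|_1 = |A^{-1} x|.\<close>

definition Kfun :: "('a::real_normed_vector \<Rightarrow> 'a) \<Rightarrow> real \<Rightarrow> 'a \<Rightarrow> real" where
  "Kfun A t x = (INF x1\<in>range A. sqrt ((norm (x - x1))\<^sup>2 + t\<^sup>2 * (norm (inv A x1))\<^sup>2))"

definition interp_norm :: "('a::real_normed_vector \<Rightarrow> 'a) \<Rightarrow> real \<Rightarrow> 'a \<Rightarrow> ereal" where
  "interp_norm A \<nu> x = (SUP t\<in>{0<..}. ereal (t powr (-\<nu>) * Kfun A t x))"

definition Nconst :: "real \<Rightarrow> real" where
  "Nconst \<nu> = (if \<nu> = 0 \<or> \<nu> = 1 then 1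
               else 1 / sqrt (\<nu> powr \<nu> * (1 - \<nu>) powr (1 - \<nu>)))"

end

theory Submission imports Defs begin

locale adjs =
  fixes T :: "'a::{real_inner,complete_space} \<Rightarrow> 'b::{real_inner,complete_space}"
    and Tadj :: "'b \<Rightarrow> 'a"
  assumes bl: "bounded_linear T"
    and adj: "\<forall>x y. inner (T x) y = inner x (Tadj y)"
begin

lemma inner_ext: fixes a b :: "'c::real_inner"
  assumes "\<And>x. inner x a = inner x b" shows "a = b"
proof -
  have "inner (a - b) (a - b) = 0" using assms[of "a-b"] by (simp add: inner_diff_right)
  thus ?thesis by simp
qed

lemma Tadj_add: "Tadj (x + y) = Tadj x + Tadj y"
  by (rule inner_ext) (metis adj inner_add_right)

lemma Tadj_scale: "Tadj (c *\<^sub>R x) = c *\<^sub>R Tadj x"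
  by (rule inner_ext) (metis adj inner_scaleR_right)

lemma lin_Tadj: "linear Tadj"
  by (rule linearI) (simp_all add: Tadj_add Tadj_scale)

lemma lin_T: "linear T" using bl bounded_linear.linear by blast

lemma Tadj_diff: "Tadj (x - y) = Tadj x - Tadj y"
  using lin_Tadj linear_diff by blast

lemma T_diff: "T (x - y) = T x - T y"
  using lin_T linear_diff by blast
lemma T_add: "T (x + y) = T x + T y"
  using lin_T linear_add by blast
lemma T_scale: "T (c *\<^sub>R x) = c *\<^sub>R T x"
  using lin_T linear_scale by blast

lemma A_inner: "inner (Tadj (T p)) q = inner (T p) (T q)"
  by (metis adj inner_commute)

lemma A_pos: "inner (Tadj (T p)) p = (norm (T p))\<^sup>2"
  by (simp add: A_inner power2_norm_eq_inner)

lemma para: fixes a b :: "'c::real_inner"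
  shows "(norm a)\<^sup>2 / 2 + (norm b)\<^sup>2 / 2 - (norm ((1/2) *\<^sub>R (a + b)))\<^sup>2 = (norm (a - b))\<^sup>2 / 4"
  by (simp add: power2_norm_eq_inner inner_add_left inner_add_right inner_diff_left inner_diff_right inner_commute field_simps)

lemma norm_sub_sq: fixes u v :: "'c::real_inner"
  shows "(norm (u - s *\<^sub>R v))\<^sup>2 = (norm u)\<^sup>2 - 2 * s * inner u v + s\<^sup>2 * (norm v)\<^sup>2"
  unfolding power2_norm_eq_inner by (simp add: inner_diff_left inner_diff_right inner_commute power2_eq_square algebra_simps)

lemma norm_add_sq: fixes u v :: "'c::real_inner"
  shows "(norm (u + s *\<^sub>R v))\<^sup>2 = (norm u)\<^sup>2 + 2 * s * inner u v + s\<^sup>2 * (norm v)\<^sup>2"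
  unfolding power2_norm_eq_inner by (simp add: inner_add_left inner_add_right inner_commute power2_eq_square algebra_simps)

lemma exists_sol:
  assumes apos: "\<alpha> > 0" shows "\<exists>x. Tadj (T x) + \<alpha> *\<^sub>R x = Tadj b + \<alpha> *\<^sub>R c"
proof -
  define J where "J x = (norm (T x - b))\<^sup>2 + \<alpha> * (norm (x - c))\<^sup>2" for x
  define d where "d = Inf (range J)"
  have J0: "J x \<ge> 0" for x using apos by (simp add: J_def)
  have bdd: "bdd_below (range J)" using J0 by (intro bdd_belowI[of _ 0]) auto
  have dle: "d \<le> J x" for x unfolding d_def by (rule cInf_lower[OF _ bdd]) simp
  have "\<exists>x. J x < d + 1 / real (Suc n)" for n
  proof -
    have "Inf (range J) < d + 1 / real (Suc n)" by (simp add: d_def)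
    from cInf_lessD[OF _ this] show ?thesis by auto
  qed
  then obtain xs where xs: "\<And>n. J (xs n) < d + 1 / real (Suc n)" by metis
  have mid: "\<alpha> * (norm (x - y))\<^sup>2 / 4 \<le> J x / 2 + J y / 2 - J ((1/2) *\<^sub>R (x + y))" for x y
  proof -
    have e1: "T ((1/2) *\<^sub>R (x + y)) - b = (1/2) *\<^sub>R ((T x - b) + (T y - b))"
      by (simp add: T_scale T_add algebra_simps flip: scaleR_add_left)
    have e2: "(1/2) *\<^sub>R (x + y) - c = (1/2) *\<^sub>R ((x - c) + (y - c))"
      by (simp add: algebra_simps flip: scaleR_add_left)
    define u1 where "u1 = T x - b"
    define u2 where "u2 = T y - b"
    define v1 where "v1 = x - c"
    define v2 where "v2 = y - c"
    have d1: "u1 - u2 = T x - T y" by (simp add: u1_def u2_def)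
    have d2: "v1 - v2 = x - y" by (simp add: v1_def v2_def)
    have "J x / 2 + J y / 2 - J ((1/2) *\<^sub>R (x + y)) =
       ((norm u1)\<^sup>2 / 2 + (norm u2)\<^sup>2 / 2 - (norm ((1/2) *\<^sub>R (u1 + u2)))\<^sup>2)
       + \<alpha> * ((norm v1)\<^sup>2 / 2 + (norm v2)\<^sup>2 / 2 - (norm ((1/2) *\<^sub>R (v1 + v2)))\<^sup>2)"
      unfolding J_def e1 e2 u1_def[symmetric] u2_def[symmetric] v1_def[symmetric] v2_def[symmetric]
      by (simp add: algebra_simps add_divide_distrib)
    also have "\<dots> = (norm (u1 - u2))\<^sup>2 / 4 + \<alpha> * ((norm (v1 - v2))\<^sup>2 / 4)"
      by (simp only: para)
    finally have "J x / 2 + J y / 2 - J ((1/2) *\<^sub>R (x + y)) =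
       (norm (u1 - u2))\<^sup>2 / 4 + \<alpha> * ((norm (x - y))\<^sup>2 / 4)" using d2 by simp
    also have "\<dots> \<ge> \<alpha> * (norm (x - y))\<^sup>2 / 4" by simp
    finally show ?thesis .
  qed
  have "Cauchy xs"
  proof (rule CauchyI)
    fix e :: real assume "e > 0"
    then have "\<alpha> * e\<^sup>2 / 4 > 0" using apos by simp
    then obtain M where M: "inverse (real (Suc M)) < \<alpha> * e\<^sup>2 / 4" using reals_Archimedean by blast
    show "\<exists>M. \<forall>m\<ge>M. \<forall>n\<ge>M. norm (xs m - xs n) < e"
    proof (intro exI allI impI)
      fix m n assume mn: "M \<le> m" "M \<le> n"
      have "1 / real (Suc m) \<le> 1 / real (Suc M)" "1 / real (Suc n) \<le> 1 / real (Suc M)"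
        using mn by (auto simp: frac_le)
      then have "J (xs m) / 2 + J (xs n) / 2 - J ((1/2) *\<^sub>R (xs m + xs n)) < 1 / real (Suc M)"
        using xs[of m] xs[of n] dle[of "(1/2) *\<^sub>R (xs m + xs n)"] by linarith
      with mid[of "xs m" "xs n"] M have "\<alpha> * (norm (xs m - xs n))\<^sup>2 / 4 < \<alpha> * e\<^sup>2 / 4"
        by (simp add: inverse_eq_divide)
      then have "(norm (xs m - xs n))\<^sup>2 < e\<^sup>2" using apos by simp
      then show "norm (xs m - xs n) < e" using \<open>e > 0\<close> by (simp add: power_less_imp_less_base)
    qed
  qed
  then obtain xst where lim: "xs \<longlonglongrightarrow> xst" using Cauchy_convergent_iff convergent_def by blast
  have "(\<lambda>n. J (xs n)) \<longlonglongrightarrow> J xst"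
    unfolding J_def by (intro tendsto_intros bounded_linear.tendsto[OF bl] lim)
  moreover have "(\<lambda>n. d + 1 / real (Suc n)) \<longlonglongrightarrow> d + 0"
    by (intro tendsto_intros LIMSEQ_Suc[OF lim_inverse_n'] ) 
  ultimately have "J xst \<le> d" using xs by (intro LIMSEQ_le[where X="\<lambda>n. J (xs n)"]) (auto intro: less_imp_le)
  then have min: "J xst \<le> J y" for y using dle[of y] by linarith
  define g where "g = Tadj (T xst - b) + \<alpha> *\<^sub>R (xst - c)"
  define Q where "Q = (norm (T g))\<^sup>2 + \<alpha> * (norm g)\<^sup>2"
  have Jexp: "J (xst - s *\<^sub>R g) = J xst - 2 * s * (norm g)\<^sup>2 + s\<^sup>2 * Q" for s
  proof -
    have h1: "T (xst - s *\<^sub>R g) - b = (T xst - b) - s *\<^sub>R T g" by (simp add: T_diff T_scale)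
    have h2: "xst - s *\<^sub>R g - c = (xst - c) - s *\<^sub>R g" by simp
    have a1: "(norm (T (xst - s *\<^sub>R g) - b))\<^sup>2 = (norm (T xst - b))\<^sup>2 - 2 * s * inner (T xst - b) (T g) + s\<^sup>2 * (norm (T g))\<^sup>2"
      unfolding h1 by (rule norm_sub_sq)
    have a2: "(norm (xst - s *\<^sub>R g - c))\<^sup>2 = (norm (xst - c))\<^sup>2 - 2 * s * inner (xst - c) g + s\<^sup>2 * (norm g)\<^sup>2"
      unfolding h2 by (rule norm_sub_sq)
    have h3: "inner (T xst - b) (T g) = inner g (Tadj (T xst - b))"
      by (metis adj inner_commute)
    have h4: "(norm g)\<^sup>2 = inner g (Tadj (T xst - b)) + \<alpha> * inner (xst - c) g"
      by (simp add: g_def power2_norm_eq_inner inner_add_right inner_add_left inner_commute algebra_simps)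
    have "J (xst - s *\<^sub>R g) = (norm (T xst - b))\<^sup>2 - 2 * s * inner (T xst - b) (T g) + s\<^sup>2 * (norm (T g))\<^sup>2
       + \<alpha> * ((norm (xst - c))\<^sup>2 - 2 * s * inner (xst - c) g + s\<^sup>2 * (norm g)\<^sup>2)"
      unfolding J_def a1 a2 ..
    also have "\<dots> = J xst - 2 * s * (inner g (Tadj (T xst - b)) + \<alpha> * inner (xst - c) g) + s\<^sup>2 * Q"
      unfolding J_def Q_def h3 by (simp add: algebra_simps)
    finally show ?thesis unfolding h4[symmetric] .
  qed
  have "g = 0"
  proof (rule ccontr)
    assume "g \<noteq> 0"
    then have gp: "(norm g)\<^sup>2 > 0" by simp
    have Q0: "Q \<ge> 0" using apos by (simp add: Q_def)
    define s where "s = (norm g)\<^sup>2 / (Q + 1)"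
    have sp: "s > 0" using gp Q0 by (simp add: s_def)
    have "s * Q < (norm g)\<^sup>2" using gp Q0 by (simp add: s_def field_simps)
    then have "s * (s * Q) < s * (norm g)\<^sup>2" using sp by (rule mult_strict_left_mono)
    moreover have "s * (norm g)\<^sup>2 \<le> 2 * s * (norm g)\<^sup>2" using sp gp by simp
    ultimately have "s\<^sup>2 * Q < 2 * s * (norm g)\<^sup>2" by (simp add: power2_eq_square mult.assoc)
    then have "J (xst - s *\<^sub>R g) < J xst" using Jexp by simp
    with min show False by (meson not_le)
  qed
  then have "Tadj (T xst) + \<alpha> *\<^sub>R xst = Tadj b + \<alpha> *\<^sub>R c"
    by (simp add: g_def Tadj_diff algebra_simps)
  then show ?thesis by blast
qed

end

locale adjs2 = adjs T Tadj for T :: "'a::{real_inner,complete_space} \<Rightarrow> 'b::{real_inner,complete_space}"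
    and Tadj :: "'b \<Rightarrow> 'a" +
  assumes injT: "inj T"
begin

lemma A_self: "inner (Tadj (T p)) q = inner p (Tadj (T q))"
  by (metis adj A_inner)

lemma A_diff: "Tadj (T (x - y)) = Tadj (T x) - Tadj (T y)"
  by (simp add: T_diff Tadj_diff)

lemma zero_of_Aa: assumes "\<alpha> > 0" "Tadj (T z) + \<alpha> *\<^sub>R z = 0" shows "z = 0"
proof -
  have "0 = inner (Tadj (T z) + \<alpha> *\<^sub>R z) z" using assms(2) by simp
  also have "\<dots> = (norm (T z))\<^sup>2 + \<alpha> * (norm z)\<^sup>2"
    by (simp add: inner_add_left A_pos power2_norm_eq_inner)
  finally have "\<alpha> * (norm z)\<^sup>2 \<le> 0" by (smt (verit) zero_le_power2)
  then have "(norm z)\<^sup>2 \<le> 0" using assms(1) by (simp add: mult_le_0_iff)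
  then show ?thesis by simp
qed

lemma Aa_inj: assumes "\<alpha> > 0" "Tadj (T x) + \<alpha> *\<^sub>R x = Tadj (T y) + \<alpha> *\<^sub>R y" shows "x = y"
proof -
  have "Tadj (T (x - y)) + \<alpha> *\<^sub>R (x - y) = (Tadj (T x) + \<alpha> *\<^sub>R x) - (Tadj (T y) + \<alpha> *\<^sub>R y)"
    unfolding A_diff scaleR_diff_right by simp
  also have "\<dots> = 0" using assms(2) by simp
  finally have "x - y = 0" by (rule zero_of_Aa[OF assms(1)])
  then show ?thesis by simp
qed

lemma A_inj: "inj (\<lambda>x. Tadj (T x))"
proof (rule injI)
  fix x y assume "Tadj (T x) = Tadj (T y)"
  then have "Tadj (T (x - y)) = 0" by (simp add: A_diff)
  then have "inner (Tadj (T (x - y))) (x - y) = 0" by simp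
  then have "T (x - y) = 0" by (simp add: A_pos)
  then have "T x = T y" by (simp add: T_diff)
  then show "x = y" using injT by (meson injD)
qed

lemma cs2: fixes a b c e :: real shows "a * c + b * e \<le> sqrt (a\<^sup>2 + b\<^sup>2) * sqrt (c\<^sup>2 + e\<^sup>2)"
proof -
  have "(a * c + b * e)\<^sup>2 \<le> (a\<^sup>2 + b\<^sup>2) * (c\<^sup>2 + e\<^sup>2)"
  proof -
    have "(a\<^sup>2 + b\<^sup>2) * (c\<^sup>2 + e\<^sup>2) - (a * c + b * e)\<^sup>2 = (a * e - b * c)\<^sup>2"
      by (simp add: power2_eq_square algebra_simps)
    then show ?thesis by (smt (verit) zero_le_power2)
  qed
  then show ?thesis by (simp add: real_le_rsqrt real_sqrt_mult[symmetric])
qed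

lemma dbound:
  assumes ap: "\<alpha> > 0" and de: "Tadj (T d) + \<alpha> *\<^sub>R d = \<alpha> *\<^sub>R e"
  shows "norm d \<le> sqrt ((norm (e - Tadj (T z)))\<^sup>2 + \<alpha>\<^sup>2 * (norm z)\<^sup>2)"
proof -
  obtain v where v: "Tadj (T v) + \<alpha> *\<^sub>R v = Tadj 0 + \<alpha> *\<^sub>R ((1/\<alpha>) *\<^sub>R d)"
    using exists_sol[OF ap] by blast
  have T0: "Tadj 0 = 0" using Tadj_scale[of 0 0] by simp
  have v': "Tadj (T v) + \<alpha> *\<^sub>R v = d" using v ap by (simp add: T0)
  define w where "w = e - Tadj (T z)"
  have "inner d d = inner (Tadj (T v) + \<alpha> *\<^sub>R v) d" using v' by simp
  also have "\<dots> = inner v (Tadj (T d) + \<alpha> *\<^sub>R d)"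
    by (simp add: inner_add_left inner_add_right A_self)
  also have "\<dots> = \<alpha> * inner v w + \<alpha> * inner v (Tadj (T z))"
    unfolding de w_def by (simp add: inner_diff_right algebra_simps)
  also have "\<dots> = inner (\<alpha> *\<^sub>R v) w + inner (Tadj (T v)) (\<alpha> *\<^sub>R z)"
    by (simp add: A_self)
  also have "\<dots> \<le> norm (\<alpha> *\<^sub>R v) * norm w + norm (Tadj (T v)) * norm (\<alpha> *\<^sub>R z)"
    by (intro add_mono norm_cauchy_schwarz)
  also have "\<dots> \<le> sqrt ((norm (\<alpha> *\<^sub>R v))\<^sup>2 + (norm (Tadj (T v)))\<^sup>2) * sqrt ((norm w)\<^sup>2 + (norm (\<alpha> *\<^sub>R z))\<^sup>2)"
    by (rule cs2)
  also have "\<dots> = sqrt ((norm (\<alpha> *\<^sub>R v))\<^sup>2 + (norm (Tadj (T v)))\<^sup>2) * sqrt ((norm w)\<^sup>2 + \<alpha>\<^sup>2 * (norm z)\<^sup>2)"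
    by (simp add: power_mult_distrib)
  also have "\<dots> \<le> norm d * sqrt ((norm w)\<^sup>2 + \<alpha>\<^sup>2 * (norm z)\<^sup>2)"
  proof (rule mult_right_mono)
    have "(norm d)\<^sup>2 = inner (Tadj (T v) + \<alpha> *\<^sub>R v) (Tadj (T v) + \<alpha> *\<^sub>R v)"
      using v' by (simp add: power2_norm_eq_inner)
    also have "\<dots> = (norm (Tadj (T v)))\<^sup>2 + (norm (\<alpha> *\<^sub>R v))\<^sup>2 + 2 * \<alpha> * inner (Tadj (T v)) v"
      by (simp only: power2_norm_eq_inner[symmetric] norm_add_sq) (simp add: power_mult_distrib)
    also have "\<dots> \<ge> (norm (Tadj (T v)))\<^sup>2 + (norm (\<alpha> *\<^sub>R v))\<^sup>2"
      using ap by (simp add: A_pos)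
    finally have "(norm (\<alpha> *\<^sub>R v))\<^sup>2 + (norm (Tadj (T v)))\<^sup>2 \<le> (norm d)\<^sup>2" by simp
    from real_sqrt_le_mono[OF this]
    show "sqrt ((norm (\<alpha> *\<^sub>R v))\<^sup>2 + (norm (Tadj (T v)))\<^sup>2) \<le> norm d" by simp
  qed (simp add: power_mult_distrib)
  finally have ddle: "inner d d \<le> norm d * sqrt ((norm w)\<^sup>2 + \<alpha>\<^sup>2 * (norm z)\<^sup>2)" .
  have "inner d d = norm d * norm d" by (metis dot_square_norm power2_eq_square)
  with ddle have "norm d * norm d \<le> norm d * sqrt ((norm w)\<^sup>2 + \<alpha>\<^sup>2 * (norm z)\<^sup>2)" by linarith
  then have "norm d \<le> sqrt ((norm w)\<^sup>2 + \<alpha>\<^sup>2 * (norm z)\<^sup>2)"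
  proof (cases "norm d = 0")
    case False
    then have "norm d > 0" by simp
    with \<open>norm d * norm d \<le> _\<close> show ?thesis by (rule mult_left_le_imp_le)
  qed simp
  then show ?thesis unfolding w_def .
qed

lemma rmono:
  assumes "0 < \<alpha>" "\<alpha> < \<beta>" "Tadj (T r1) + \<alpha> *\<^sub>R r1 = e" "Tadj (T r2) + \<beta> *\<^sub>R r2 = e"
  shows "norm r2 \<le> norm r1"
proof -
  have ap: "\<alpha> > 0" using assms by simp
  obtain w where w: "Tadj (T w) + \<alpha> *\<^sub>R w = Tadj 0 + \<alpha> *\<^sub>R ((1/\<alpha>) *\<^sub>R r2)"
    using exists_sol[OF ap] by blast
  have T0: "Tadj 0 = 0" using Tadj_scale[of 0 0] by simp
  have w': "Tadj (T w) + \<alpha> *\<^sub>R w = r2" using w ap by (simp add: T0)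
  have "Tadj (T (r2 + (\<beta> - \<alpha>) *\<^sub>R w)) + \<alpha> *\<^sub>R (r2 + (\<beta> - \<alpha>) *\<^sub>R w)
      = Tadj (T r2) + \<alpha> *\<^sub>R r2 + (\<beta> - \<alpha>) *\<^sub>R (Tadj (T w) + \<alpha> *\<^sub>R w)"
    by (simp only: T_add T_scale Tadj_add Tadj_scale) (simp add: algebra_simps)
  also have "\<dots> = Tadj (T r2) + \<beta> *\<^sub>R r2" unfolding w' by (simp add: algebra_simps)
  finally have "r1 = r2 + (\<beta> - \<alpha>) *\<^sub>R w"
    using Aa_inj[OF ap] assms(3,4) by metis
  then have "(norm r1)\<^sup>2 = (norm r2)\<^sup>2 + 2 * (\<beta> - \<alpha>) * inner r2 w + (\<beta> - \<alpha>)\<^sup>2 * (norm w)\<^sup>2"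
    by (simp add: norm_add_sq)
  moreover have "inner r2 w \<ge> 0"
    using ap by (simp add: w'[symmetric] inner_add_left A_pos power2_norm_eq_inner[symmetric])
  moreover have "2 * (\<beta> - \<alpha>) * inner r2 w \<ge> 0" using assms(2) \<open>inner r2 w \<ge> 0\<close> by simp
  moreover have "(\<beta> - \<alpha>)\<^sup>2 * (norm w)\<^sup>2 \<ge> 0" by simp
  ultimately have "(norm r2)\<^sup>2 \<le> (norm r1)\<^sup>2" by linarith
  then show ?thesis by (rule power2_le_imp_le) simp
qed

end
lemma sqrt_exp: "x > 0 \<Longrightarrow> sqrt x = exp (ln x / 2)"
  by (simp add: powr_half_sqrt[symmetric] powr_def)

lemma hN:
  assumes "0 < \<nu>" "\<nu> < 1"
  shows "sqrt ((1-\<nu>)/\<nu>) powr \<nu> * sqrt (1 + 1 / (sqrt ((1-\<nu>)/\<nu>))\<^sup>2)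
       = 1 / sqrt (\<nu> powr \<nu> * (1 - \<nu>) powr (1 - \<nu>))"
proof -
  define a where "a = ln \<nu>"
  define b where "b = ln (1 - \<nu>)"
  have q: "(1-\<nu>)/\<nu> > 0" using assms by simp
  have s0: "sqrt ((1-\<nu>)/\<nu>) = exp ((b - a)/2)"
    using q assms by (simp add: sqrt_exp a_def b_def ln_div)
  have sq: "(sqrt ((1-\<nu>)/\<nu>))\<^sup>2 = (1-\<nu>)/\<nu>" using q by simp
  have one: "1 + 1 / ((1-\<nu>)/\<nu>) = 1 / (1 - \<nu>)" using assms by (simp add: field_simps)
  have p1: "sqrt ((1-\<nu>)/\<nu>) powr \<nu> = exp (\<nu> * (b - a) / 2)" by (simp add: s0 powr_def)
  have p2: "sqrt (1 / (1 - \<nu>)) = exp (- b / 2)" using assms by (simp add: sqrt_exp b_def ln_div)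
  have l: "sqrt ((1-\<nu>)/\<nu>) powr \<nu> * sqrt (1 + 1 / (sqrt ((1-\<nu>)/\<nu>))\<^sup>2) = exp (\<nu> * (b - a) / 2 - b / 2)"
    unfolding sq one p1 p2 mult_exp_exp by (rule arg_cong[where f=exp]) (simp add: algebra_simps)
  have X: "\<nu> powr \<nu> * (1 - \<nu>) powr (1 - \<nu>) = exp (\<nu> * a + (1 - \<nu>) * b)"
    using assms by (simp add: powr_def a_def b_def exp_add)
  have Y: "sqrt (\<nu> powr \<nu> * (1 - \<nu>) powr (1 - \<nu>)) = exp ((\<nu> * a + (1 - \<nu>) * b) / 2)"
    unfolding X by (simp add: sqrt_exp)
  have r: "1 / sqrt (\<nu> powr \<nu> * (1 - \<nu>) powr (1 - \<nu>)) = exp (- ((\<nu> * a + (1 - \<nu>) * b) / 2))"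
    unfolding Y exp_minus by (simp add: inverse_eq_divide)
  show ?thesis unfolding l r by (rule arg_cong[where f=exp]) (simp add: field_simps)
qed

lemma eps01:
  fixes x Sr \<nu> :: real
  assumes "\<nu> = 0 \<or> \<nu> = 1" "Sr \<ge> 0" "\<And>s. s > 0 \<Longrightarrow> x \<le> Sr * (s powr \<nu> * sqrt (1 + 1 / s\<^sup>2))"
  shows "x \<le> Sr"
proof (rule field_le_epsilon)
  fix \<epsilon> :: real assume ep: "\<epsilon> > 0"
  show "x \<le> Sr + \<epsilon>"
  proof (cases "\<nu> = 0")
    case True
    define s where "s = (Sr + 1) / \<epsilon>"
    have sp: "s > 0" using ep assms(2) by (simp add: s_def)
    have "sqrt (1 + 1 / s\<^sup>2) \<le> 1 + 1 / s"
      by (rule real_le_lsqrt) (use sp in \<open>auto simp: power2_eq_square field_simps\<close>)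
    then have "Sr * sqrt (1 + 1 / s\<^sup>2) \<le> Sr * (1 + 1 / s)" using assms(2) by (rule mult_left_mono)
    also have "\<dots> = Sr + Sr * \<epsilon> / (Sr + 1)" using ep assms(2) by (simp add: s_def field_simps)
    also have "\<dots> \<le> Sr + \<epsilon>" using ep assms(2) by (simp add: field_simps)
    finally show ?thesis using assms(3)[OF sp] True sp by simp
  next
    case False
    then have n1: "\<nu> = 1" using assms(1) by simp
    define s where "s = \<epsilon> / (Sr + 1)"
    have sp: "s > 0" using ep assms(2) by (simp add: s_def)
    have "s * sqrt (1 + 1 / s\<^sup>2) = sqrt (s\<^sup>2 * (1 + 1 / s\<^sup>2))" using sp by (simp add: real_sqrt_mult)
    also have "\<dots> = sqrt (s\<^sup>2 + 1)" using sp by (simp add: field_simps)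
    also have "\<dots> \<le> 1 + s"
      by (rule real_le_lsqrt) (use sp in \<open>auto simp: power2_eq_square field_simps\<close>)
    finally have "Sr * (s * sqrt (1 + 1 / s\<^sup>2)) \<le> Sr * (1 + s)" using assms(2) by (rule mult_left_mono)
    also have "\<dots> = Sr + Sr * \<epsilon> / (Sr + 1)" using ep assms(2) by (simp add: s_def field_simps)
    also have "\<dots> \<le> Sr + \<epsilon>" using ep assms(2) by (simp add: field_simps)
    finally show ?thesis using assms(3)[OF sp] n1 sp by simp
  qed
qed

theorem proposition3:
  fixes T :: "'a::{real_inner,complete_space} \<Rightarrow> 'b::{real_inner,complete_space}"
    and Tadj :: "'b \<Rightarrow> 'a"
    and xd x0 :: 'a and \<nu> :: real
  assumes "bounded_linear T" and "inj T"
    and "\<forall>x y. inner (T x) y = inner x (Tadj y)"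
    and "0 \<le> \<nu>" and "\<nu> \<le> 1"
  defines "xa \<equiv> \<lambda>\<alpha>::real. inv (\<lambda>x. Tadj (T x) + \<alpha> *\<^sub>R x) (Tadj (T xd) + \<alpha> *\<^sub>R x0)"
  defines "S \<equiv> (SUP \<alpha>\<in>{0<..}. ereal (\<alpha> powr (-\<nu>) * norm (xd - xa \<alpha>)))"
  defines "P \<equiv> interp_norm (Tadj \<circ> T) \<nu> (xd - x0)"
  shows "ereal (1 / Nconst \<nu>) * P \<le> S \<and> S \<le> P
    \<and> ((\<nu> = 0 \<or> \<nu> = 1) \<longrightarrow> S = P)
    \<and> (\<nu> = 1 \<longrightarrow>
          ((\<lambda>\<alpha>. ereal (\<alpha> powr (-\<nu>) * norm (xd - xa \<alpha>))) \<longlongrightarrow> P) (at_right 0))"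
proof -
  interpret adjs2 T Tadj unfolding adjs2_def adjs_def adjs2_axioms_def using assms(1,2,3) by blast
  define e where "e = xd - x0"
  define A where "A = (\<lambda>x. Tadj (T x))"
  have Acomp: "Tadj \<circ> T = A" by (simp add: A_def comp_def)
  have Ainj: "inj A" unfolding A_def by (rule A_inj)
  define K where "K t = Kfun A t e" for t
  define dd where "dd \<alpha> = xd - xa \<alpha>" for \<alpha>
  define f where "f \<alpha> = \<alpha> powr (-\<nu>) * norm (dd \<alpha>)" for \<alpha>
  define g where "g t = t powr (-\<nu>) * K t" for t
  have Pdef: "P = (SUP t\<in>{0<..}. ereal (g t))"
    by (simp add: P_def interp_norm_def Acomp K_def e_def g_def)
  have Sdef: "S = (SUP \<alpha>\<in>{0<..}. ereal (f \<alpha>))"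
    by (simp add: S_def f_def dd_def)
  have xa_eq: "Tadj (T (xa \<alpha>)) + \<alpha> *\<^sub>R xa \<alpha> = Tadj (T xd) + \<alpha> *\<^sub>R x0" if ap0: "\<alpha> > 0" for \<alpha>
  proof -
    obtain x where "Tadj (T x) + \<alpha> *\<^sub>R x = Tadj (T xd) + \<alpha> *\<^sub>R x0"
      using exists_sol[OF ap0] by blast
    then have "Tadj (T xd) + \<alpha> *\<^sub>R x0 \<in> range (\<lambda>x. Tadj (T x) + \<alpha> *\<^sub>R x)" by (rule range_eqI[OF sym])
    from f_inv_into_f[OF this] show ?thesis by (simp only: xa_def)
  qed
  have dd_eq: "Tadj (T (dd \<alpha>)) + \<alpha> *\<^sub>R dd \<alpha> = \<alpha> *\<^sub>R e" if "\<alpha> > 0" for \<alpha>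
  proof -
    have "Tadj (T (dd \<alpha>)) + \<alpha> *\<^sub>R dd \<alpha> = (Tadj (T xd) + \<alpha> *\<^sub>R xd) - (Tadj (T (xa \<alpha>)) + \<alpha> *\<^sub>R xa \<alpha>)"
      unfolding dd_def A_diff scaleR_diff_right by simp
    also have "\<dots> = \<alpha> *\<^sub>R e" unfolding xa_eq[OF that] e_def by (simp add: scaleR_diff_right)
    finally show ?thesis .
  qed
  have Kbdd: "bdd_below ((\<lambda>x1. sqrt ((norm (e - x1))\<^sup>2 + t\<^sup>2 * (norm (inv A x1))\<^sup>2)) ` range A)" for t
    by (rule bdd_belowI[of _ 0]) auto
  have K_ge: "norm (dd \<alpha>) \<le> K \<alpha>" if "\<alpha> > 0" for \<alpha>
    unfolding K_def Kfun_def
  proof (rule cINF_greatest)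
    show "range A \<noteq> {}" by simp
    fix x1 assume "x1 \<in> range A"
    then obtain z where z: "x1 = A z" by blast
    have "inv A x1 = z" unfolding z using Ainj by (simp add: inv_f_f)
    then show "norm (dd \<alpha>) \<le> sqrt ((norm (e - x1))\<^sup>2 + \<alpha>\<^sup>2 * (norm (inv A x1))\<^sup>2)"
      using dbound[OF that dd_eq[OF that], of z] by (simp add: z A_def)
  qed
  have K_le: "K t \<le> sqrt ((norm (e - A r))\<^sup>2 + t\<^sup>2 * (norm r)\<^sup>2)" for t r
  proof -
    have "inv A (A r) = r" using Ainj by (simp add: inv_f_f)
    then show ?thesis unfolding K_def Kfun_def
      by (intro cINF_lower2[OF Kbdd, of "A r"]) auto
  qed
  have K_le2: "K t \<le> norm (dd \<alpha>) * sqrt (1 + t\<^sup>2 / \<alpha>\<^sup>2)" if ap: "\<alpha> > 0" for t \<alpha>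
  proof -
    define r where "r = (1 / \<alpha>) *\<^sub>R dd \<alpha>"
    have "A r = (1 / \<alpha>) *\<^sub>R A (dd \<alpha>)" by (simp add: r_def A_def T_scale Tadj_scale)
    also have "\<dots> = (1 / \<alpha>) *\<^sub>R (\<alpha> *\<^sub>R e - \<alpha> *\<^sub>R dd \<alpha>)"
      using dd_eq[OF ap] by (simp add: A_def eq_diff_eq)
    also have "\<dots> = e - dd \<alpha>" using ap by (simp add: scaleR_diff_right)
    finally have "e - A r = dd \<alpha>" by simp
    then have "K t \<le> sqrt ((norm (dd \<alpha>))\<^sup>2 + t\<^sup>2 * (norm (dd \<alpha>) / \<alpha>)\<^sup>2)"
      using K_le[of t r] ap by (simp add: r_def)
    also have "(norm (dd \<alpha>))\<^sup>2 + t\<^sup>2 * (norm (dd \<alpha>) / \<alpha>)\<^sup>2 = (norm (dd \<alpha>))\<^sup>2 * (1 + t\<^sup>2 / \<alpha>\<^sup>2)"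
      by (simp add: power_divide field_simps)
    also have "sqrt \<dots> = norm (dd \<alpha>) * sqrt (1 + t\<^sup>2 / \<alpha>\<^sup>2)" by (simp add: real_sqrt_mult)
    finally show ?thesis .
  qed
  have f0: "f \<alpha> \<ge> 0" for \<alpha> by (simp add: f_def)
  have f_le_g: "f \<alpha> \<le> g \<alpha>" if "\<alpha> > 0" for \<alpha>
    unfolding f_def g_def by (rule mult_left_mono[OF K_ge[OF that]]) simp
  have key: "g t \<le> f (s * t) * (s powr \<nu> * sqrt (1 + 1 / s\<^sup>2))" if tp: "t > 0" and sp: "s > 0" for t s
  proof -
    define \<alpha> where "\<alpha> = s * t"
    have ap: "\<alpha> > 0" using tp sp by (simp add: \<alpha>_def)
    have r1: "t\<^sup>2 / \<alpha>\<^sup>2 = 1 / s\<^sup>2" using tp sp by (simp add: \<alpha>_def power_mult_distrib)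
    have r2: "norm (dd \<alpha>) = \<alpha> powr \<nu> * f \<alpha>"
      using ap by (simp add: f_def powr_minus field_simps)
    have r3: "t powr (-\<nu>) * \<alpha> powr \<nu> = s powr \<nu>"
      using tp sp by (simp add: \<alpha>_def powr_mult powr_minus field_simps)
    have "g t \<le> t powr (-\<nu>) * (norm (dd \<alpha>) * sqrt (1 + t\<^sup>2 / \<alpha>\<^sup>2))"
      unfolding g_def by (rule mult_left_mono[OF K_le2[OF ap]]) simp
    also have "\<dots> = (t powr (-\<nu>) * \<alpha> powr \<nu>) * f \<alpha> * sqrt (1 + 1 / s\<^sup>2)"
      unfolding r1 r2 by (simp add: algebra_simps)
    also have "\<dots> = f (s * t) * (s powr \<nu> * sqrt (1 + 1 / s\<^sup>2))"
      unfolding r3 by (simp add: \<alpha>_def algebra_simps)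
    finally show ?thesis .
  qed
  have SleP: "S \<le> P"
    unfolding Sdef Pdef by (rule SUP_mono) (use f_le_g in auto)
  have fin: "\<exists>Sr. S = ereal Sr \<and> Sr \<ge> 0 \<and> (\<forall>\<alpha>>0. f \<alpha> \<le> Sr)" if "S \<noteq> \<infinity>"
  proof -
    have upper: "ereal (f \<alpha>) \<le> S" if "\<alpha> > 0" for \<alpha>
      unfolding Sdef by (rule SUP_upper) (use that in auto)
    have "ereal 0 \<le> S" using upper[of 1] f0[of 1] by (meson ereal_less_eq(3) order_trans zero_less_one)
    then have "S \<noteq> -\<infinity>" by auto
    then obtain Sr where Sr: "S = ereal Sr" using \<open>S \<noteq> \<infinity>\<close> by (cases S) auto
    show ?thesis using upper \<open>ereal 0 \<le> S\<close> by (intro exI[of _ Sr]) (auto simp: Sr)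
  qed
  have hpos: "s powr \<nu> * sqrt (1 + 1 / s\<^sup>2) \<ge> 0" for s by simp
  have gSr: "g t \<le> Sr * (s powr \<nu> * sqrt (1 + 1 / s\<^sup>2))"
    if "\<forall>\<alpha>>0. f \<alpha> \<le> Sr" "t > 0" "s > 0" for Sr t s
  proof -
    have "f (s * t) \<le> Sr" using that by simp
    from mult_right_mono[OF this hpos[of s]] key[OF that(2,3)] show ?thesis by linarith
  qed
  have PleS01: "P \<le> S" if n01: "\<nu> = 0 \<or> \<nu> = 1"
  proof (cases "S = \<infinity>")
    case False
    then obtain Sr where Sr: "S = ereal Sr" "Sr \<ge> 0" "\<forall>\<alpha>>0. f \<alpha> \<le> Sr" using fin by blast
    have "g t \<le> Sr" if "t > 0" for t
      by (rule eps01[OF n01 Sr(2)]) (use gSr[OF Sr(3) that] in blast)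
    then show ?thesis unfolding Pdef Sr(1) by (intro SUP_least) auto
  qed simp
  have lower: "ereal (1 / Nconst \<nu>) * P \<le> S"
  proof (cases "\<nu> = 0 \<or> \<nu> = 1")
    case True
    then show ?thesis using PleS01 by (simp add: Nconst_def one_ereal_def[symmetric])
  next
    case False
    then have n: "0 < \<nu>" "\<nu> < 1" using assms(4,5) by auto
    define N where "N = 1 / sqrt (\<nu> powr \<nu> * (1 - \<nu>) powr (1 - \<nu>))"
    have NC: "Nconst \<nu> = N" using False by (simp add: Nconst_def N_def)
    have Np: "N > 0" using n by (simp add: N_def)
    show ?thesis
    proof (cases "S = \<infinity>")
      case False
      then obtain Sr where Sr: "S = ereal Sr" "Sr \<ge> 0" "\<forall>\<alpha>>0. f \<alpha> \<le> Sr" using fin by blast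
      define s0 where "s0 = sqrt ((1-\<nu>)/\<nu>)"
      have s0p: "s0 > 0" using n by (simp add: s0_def)
      have hs0: "s0 powr \<nu> * sqrt (1 + 1 / s0\<^sup>2) = N" unfolding s0_def N_def by (rule hN[OF n])
      have "g t \<le> Sr * N" if "t > 0" for t using gSr[OF Sr(3) that s0p] hs0 by simp
      then have "P \<le> ereal (Sr * N)" unfolding Pdef by (intro SUP_least) auto
      then have "ereal (1 / N) * P \<le> ereal (1 / N) * ereal (Sr * N)"
        by (rule ereal_mult_left_mono) (use Np in simp)
      also have "\<dots> = S" using Np by (simp add: Sr(1))
      finally show ?thesis by (simp add: NC)
    qed simp
  qed
  have lim: "((\<lambda>\<alpha>. ereal (\<alpha> powr (-\<nu>) * norm (xd - xa \<alpha>))) \<longlongrightarrow> P) (at_right 0)" if n1: "\<nu> = 1"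
  proof -
    have SP: "S = P" using SleP PleS01 n1 by simp
    have fr: "f \<alpha> = norm ((1 / \<alpha>) *\<^sub>R dd \<alpha>)" if "\<alpha> > 0" for \<alpha>
      using that n1 by (simp add: f_def powr_minus divide_inverse)
    have req: "Tadj (T ((1 / \<alpha>) *\<^sub>R dd \<alpha>)) + \<alpha> *\<^sub>R ((1 / \<alpha>) *\<^sub>R dd \<alpha>) = e" if "\<alpha> > 0" for \<alpha>
    proof -
      have "Tadj (T ((1 / \<alpha>) *\<^sub>R dd \<alpha>)) + \<alpha> *\<^sub>R ((1 / \<alpha>) *\<^sub>R dd \<alpha>)
          = (1 / \<alpha>) *\<^sub>R (Tadj (T (dd \<alpha>)) + \<alpha> *\<^sub>R dd \<alpha>)"
        by (simp add: T_scale Tadj_scale scaleR_add_right)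
      also have "\<dots> = e" using that by (simp add: dd_eq[OF that])
      finally show ?thesis .
    qed
    have fmono: "f \<beta> \<le> f \<alpha>" if "0 < \<alpha>" "\<alpha> < \<beta>" for \<alpha> \<beta>
      using rmono[OF that req req] that fr by simp
    have upper: "ereal (f \<alpha>) \<le> S" if "\<alpha> > 0" for \<alpha>
      unfolding Sdef by (rule SUP_upper) (use that in auto)
    have "((\<lambda>\<alpha>. ereal (f \<alpha>)) \<longlongrightarrow> S) (at_right 0)"
    proof (rule order_tendstoI)
      fix a assume "a < S"
      then obtain \<alpha>0 where a0: "\<alpha>0 > 0" "a < ereal (f \<alpha>0)" unfolding Sdef by (auto simp: less_SUP_iff)
      show "\<forall>\<^sub>F \<alpha> in at_right 0. a < ereal (f \<alpha>)"
        unfolding eventually_at_right_field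
      proof (intro exI[of _ \<alpha>0] conjI allI impI)
        fix \<alpha> :: real assume "0 < \<alpha>" "\<alpha> < \<alpha>0"
        then have "f \<alpha>0 \<le> f \<alpha>" by (rule fmono)
        with a0 show "a < ereal (f \<alpha>)" by (meson ereal_less_eq(3) less_le_trans)
      qed (use a0 in auto)
    next
      fix b assume "S < b"
      show "\<forall>\<^sub>F \<alpha> in at_right 0. ereal (f \<alpha>) < b"
        unfolding eventually_at_right_field
        by (intro exI[of _ 1]) (use upper \<open>S < b\<close> in \<open>auto intro: le_less_trans\<close>)
    qed
    then show ?thesis using SP by (simp add: f_def dd_def)
  qed
  show ?thesis using lower SleP PleS01 lim by auto
qed

end
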